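(* Let $(\mu_t)_{t\ge 0}$ and $(d_t)$ be sequences of real numbers such that: (i) for every $t$, $\mu_t>d_t$ if and only if $\mu_{t+1}>\mu_t$; (ii) there exists $t_0>0$ such that $|d_{t+1}-d_t|\le|\mu_{t+1}-\mu_t|$ for all $t\ge t_0$; (iii) $\sum_{t=0}^{\infty}|\mu_{t+1}-\mu_t|=\infty$. Then $\mu_t$ degenerates strongly, i.e. $\lim_{t\to\infty}|\mu_t-\mu_0|=\infty$ (equivalently, $\mu_t\to\infty$ or $\mu_t\to-\infty$).
   Context: $\mu_t$ models a user's interest level in an item at time $t$ and $d_t$ an action threshold at time $t$. A real sequence $(\mu_t)$ is said to degenerate strongly if $\lim_{t\to\infty}|\mu_t-\mu_0|=\infty$. *)

theory Defs
  imports Complex_Main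
begin

definition degenerates_strongly :: "(nat \<Rightarrow> real) \<Rightarrow> bool" where
  "degenerates_strongly \<mu> \<longleftrightarrow> filterlim (\<lambda>t. \<bar>\<mu> t - \<mu> 0\<bar>) at_top sequentially"

end

theory Submission
  imports Defs
begin

lemma psum_at_top:
  fixes f :: "nat \<Rightarrow> real"
  assumes nn: "\<And>t. f t \<ge> 0" and ns: "\<not> summable f"
  shows "filterlim (\<lambda>n. \<Sum>t<n. f t) at_top sequentially"
proof (subst filterlim_at_top, intro allI)
  fix Z :: real
  obtain N where N: "(\<Sum>t<N. f t) > Z"
  proof (rule ccontr)
    assume "\<not> thesis"
    then have "\<And>n. (\<Sum>t<n. f t) \<le> Z" using that by (meson not_le)
    then have "summable f" using summableI_nonneg_bounded[of f Z] nn by blast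
    with ns show False by blast
  qed
  have "\<And>n. n \<ge> N \<Longrightarrow> (\<Sum>t<N. f t) \<le> (\<Sum>t<n. f t)"
    by (rule sum_mono2) (auto simp: nn)
  then show "eventually (\<lambda>n. Z \<le> (\<Sum>t<n. f t)) sequentially"
    unfolding eventually_sequentially using N by (meson less_le_trans less_imp_le)
qed

theorem theorem4:
  fixes \<mu> d :: "nat \<Rightarrow> real"
  assumes i: "\<And>t. \<mu> t > d t \<longleftrightarrow> \<mu> (t + 1) > \<mu> t"
    and ii: "\<exists>t0 > 0. \<forall>t \<ge> t0. \<bar>d (t + 1) - d t\<bar> \<le> \<bar>\<mu> (t + 1) - \<mu> t\<bar>"
    and iii: "\<not> summable (\<lambda>t. \<bar>\<mu> (t + 1) - \<mu> t\<bar>)"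
  shows "degenerates_strongly \<mu>"
proof -
  obtain t0 where t0: "\<forall>t \<ge> t0. \<bar>d (t + 1) - d t\<bar> \<le> \<bar>\<mu> (t + 1) - \<mu> t\<bar>"
    using ii by blast
  define f where "f t = \<bar>\<mu> (t + 1) - \<mu> t\<bar>" for t
  define S where "S n = (\<Sum>t<n. f t)" for n
  have S: "filterlim S at_top sequentially"
    unfolding S_def by (rule psum_at_top) (use iii in \<open>auto simp: f_def\<close>)
  have split: "S n = S t0 + (\<Sum>t=t0..<n. f t)" if "n \<ge> t0" for n
    unfolding S_def using that
    by (metis atLeast0LessThan sum.atLeastLessThan_concat zero_le)
  show ?thesis
  proof (cases "\<mu> t0 > d t0")
    case True
    have A: "\<mu> t > d t" if "t \<ge> t0" for t
      using that
    proof (induction t rule: dec_induct)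
      case base then show ?case using True .
    next
      case (step t)
      have "\<mu> (t+1) > \<mu> t" using i step.IH by blast
      moreover have "\<bar>d (t + 1) - d t\<bar> \<le> \<bar>\<mu> (t + 1) - \<mu> t\<bar>" using t0 step.hyps by blast
      ultimately show ?case using step.IH by (simp add: abs_le_iff)
    qed
    have mu_eq: "\<mu> n = \<mu> t0 + (\<Sum>t=t0..<n. f t)" if "n \<ge> t0" for n
      using that
    proof (induction n rule: dec_induct)
      case base then show ?case by simp
    next
      case (step n)
      have "\<mu> (n+1) > \<mu> n" using i A step.hyps by blast
      moreover have fn: "f n = \<mu> (n+1) - \<mu> n" using calculation unfolding f_def by simp
      moreover have "(\<Sum>t=t0..<n+1. f t) = (\<Sum>t=t0..<n. f t) + f n"
        using step.hyps by (simp add: sum.atLeastLessThan_Suc)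
      ultimately have "\<mu> (n+1) = \<mu> t0 + (\<Sum>t=t0..<n+1. f t)"
        using step.IH fn by linarith
      then show ?case by (simp only: Suc_eq_plus1)
    qed
    have eq: "\<mu> n - \<mu> 0 = (\<mu> t0 - S t0 - \<mu> 0) + S n" if "n \<ge> t0" for n
      using split[OF that] mu_eq[OF that] by linarith
    have "filterlim (\<lambda>n. (\<mu> t0 - S t0 - \<mu> 0) + S n) at_top sequentially"
      by (rule filterlim_tendsto_add_at_top[OF tendsto_const S])
    moreover have ev: "\<forall>\<^sub>F n in sequentially. (\<mu> t0 - S t0 - \<mu> 0) + S n = \<mu> n - \<mu> 0"
      unfolding eventually_sequentially using eq by metis
    ultimately have "filterlim (\<lambda>n. \<mu> n - \<mu> 0) at_top sequentially"
      using filterlim_cong[OF refl refl ev] by simp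
    then show ?thesis unfolding degenerates_strongly_def
      by (rule filterlim_at_top_mono) (auto intro: always_eventually)
  next
    case False
    have A: "\<not> \<mu> t > d t" if "t \<ge> t0" for t
      using that
    proof (induction t rule: dec_induct)
      case base then show ?case using False .
    next
      case (step t)
      have "\<not> \<mu> (t+1) > \<mu> t" using i step.IH by blast
      moreover have "\<bar>d (t + 1) - d t\<bar> \<le> \<bar>\<mu> (t + 1) - \<mu> t\<bar>" using t0 step.hyps by blast
      ultimately show ?case using step.IH by (simp add: abs_le_iff)
    qed
    have mu_eq: "\<mu> n = \<mu> t0 - (\<Sum>t=t0..<n. f t)" if "n \<ge> t0" for n
      using that
    proof (induction n rule: dec_induct)
      case base then show ?case by simp
    next
      case (step n)
      have "\<not> \<mu> (n+1) > \<mu> n" using i A step.hyps by blast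
      moreover have fn: "f n = \<mu> n - \<mu> (n+1)" using calculation unfolding f_def by simp
      moreover have "(\<Sum>t=t0..<n+1. f t) = (\<Sum>t=t0..<n. f t) + f n"
        using step.hyps by (simp add: sum.atLeastLessThan_Suc)
      ultimately have "\<mu> (n+1) = \<mu> t0 - (\<Sum>t=t0..<n+1. f t)"
        using step.IH fn by linarith
      then show ?case by (simp only: Suc_eq_plus1)
    qed
    have eq: "\<mu> 0 - \<mu> n = (\<mu> 0 - \<mu> t0 - S t0) + S n" if "n \<ge> t0" for n
      using split[OF that] mu_eq[OF that] by linarith
    have "filterlim (\<lambda>n. (\<mu> 0 - \<mu> t0 - S t0) + S n) at_top sequentially"
      by (rule filterlim_tendsto_add_at_top[OF tendsto_const S])
    moreover have ev: "\<forall>\<^sub>F n in sequentially. (\<mu> 0 - \<mu> t0 - S t0) + S n = \<mu> 0 - \<mu> n"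
      unfolding eventually_sequentially using eq by metis
    ultimately have "filterlim (\<lambda>n. \<mu> 0 - \<mu> n) at_top sequentially"
      using filterlim_cong[OF refl refl ev] by simp
    then show ?thesis unfolding degenerates_strongly_def
      by (rule filterlim_at_top_mono) (auto intro: always_eventually)
  qed
qed

end
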